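(* Let $G$ be a countable group with a central subgroup $Z$ of finite index, and let $T$ be a left-transversal for $Z$ in $G$. If $\mu$ is a finitely additive left-invariant mean on $G$ then $\textup{dc}_\mu(G)=\frac{1}{|G/Z|}\sum_{t\in T}\frac{1}{[G:C_G(t)]}$. Moreover, if $M=(\mu_n)_{n=1}^\infty$ is a sequence of probability measures on $G$ that measures index uniformly then $\textup{dc}_M(G)=\frac{1}{|G/Z|}\sum_{t\in T}\frac{1}{[G:C_G(t)]}$, and the $\limsup$ in the definition of $\textup{dc}_M(G)$ is actually a limit.
   Context: A finitely additive left-invariant mean is a positive normalised left-invariant linear functional on $\ell^\infty(G)$, $\mu(X)=\int1_X\,d\mu$, and $\textup{dc}_\mu(G)=\int_x\int_y1_{\{xy=yx\}}\,d\mu(x)\,d\mu(y)$. $M$ measures index uniformly if $\mu_n(xH)\to1/[G:H]$ uniformly over $x\in G$ and subgroups $H$ (with $1/[G:H]=0$ for infinite index); $\textup{dc}_M(G)=\limsup_n(\mu_n\times\mu_n)(\{(x,y):xy=yx\})$. *)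

theory Defs
  imports "HOL-Algebra.Coset" "HOL-Algebra.Left_Coset" "HOL-Probability.Probability_Mass_Function"
begin

definition centralizer :: "('a, 'b) monoid_scheme \<Rightarrow> 'a \<Rightarrow> 'a set" where
  "centralizer G t = {x \<in> carrier G. x \<otimes>\<^bsub>G\<^esub> t = t \<otimes>\<^bsub>G\<^esub> x}"

definition center :: "('a, 'b) monoid_scheme \<Rightarrow> 'a set" where
  "center G = {z \<in> carrier G. \<forall>x\<in>carrier G. z \<otimes>\<^bsub>G\<^esub> x = x \<otimes>\<^bsub>G\<^esub> z}"

definition inv_index :: "('a, 'b) monoid_scheme \<Rightarrow> 'a set \<Rightarrow> real" where
  "inv_index G H = (if finite (lcosets\<^bsub>G\<^esub> H) then 1 / real (card (lcosets\<^bsub>G\<^esub> H)) else 0)"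

definition left_transversal :: "('a, 'b) monoid_scheme \<Rightarrow> 'a set \<Rightarrow> 'a set \<Rightarrow> bool" where
  "left_transversal G Z T \<longleftrightarrow> T \<subseteq> carrier G \<and> (\<forall>C\<in>lcosets\<^bsub>G\<^esub> Z. \<exists>!t. t \<in> T \<and> t \<in> C)"

definition bounded_on :: "('a, 'b) monoid_scheme \<Rightarrow> ('a \<Rightarrow> real) \<Rightarrow> bool" where
  "bounded_on G f \<longleftrightarrow> (\<exists>B. \<forall>x\<in>carrier G. \<bar>f x\<bar> \<le> B)"

text \<open>Finitely additive left-invariant mean: positive, normalised, left-invariant linear
  functional on l-infinity(G) (bounded real functions on the carrier).\<close>
definition left_invariant_mean :: "('a, 'b) monoid_scheme \<Rightarrow> (('a \<Rightarrow> real) \<Rightarrow> real) \<Rightarrow> bool" where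
  "left_invariant_mean G m \<longleftrightarrow>
     (\<forall>f g a b. bounded_on G f \<longrightarrow> bounded_on G g \<longrightarrow>
         m (\<lambda>x. a * f x + b * g x) = a * m f + b * m g) \<and>
     (\<forall>f. bounded_on G f \<longrightarrow> (\<forall>x\<in>carrier G. f x \<ge> 0) \<longrightarrow> m f \<ge> 0) \<and>
     m (\<lambda>x. 1) = 1 \<and>
     (\<forall>f g. bounded_on G f \<longrightarrow> g \<in> carrier G \<longrightarrow> m (\<lambda>x. f (g \<otimes>\<^bsub>G\<^esub> x)) = m f)"

definition dc_mean :: "('a, 'b) monoid_scheme \<Rightarrow> (('a \<Rightarrow> real) \<Rightarrow> real) \<Rightarrow> real" where
  "dc_mean G m = m (\<lambda>y. m (\<lambda>x. if x \<otimes>\<^bsub>G\<^esub> y = y \<otimes>\<^bsub>G\<^esub> x then 1 else 0))"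

definition comm_prob :: "('a, 'b) monoid_scheme \<Rightarrow> 'a pmf \<Rightarrow> real" where
  "comm_prob G p = measure_pmf.prob (pair_pmf p p) {(x, y). x \<otimes>\<^bsub>G\<^esub> y = y \<otimes>\<^bsub>G\<^esub> x}"

definition dc_seq :: "('a, 'b) monoid_scheme \<Rightarrow> (nat \<Rightarrow> 'a pmf) \<Rightarrow> ereal" where
  "dc_seq G M = limsup (\<lambda>n. ereal (comm_prob G (M n)))"

definition measures_index_uniformly :: "('a, 'b) monoid_scheme \<Rightarrow> (nat \<Rightarrow> 'a pmf) \<Rightarrow> bool" where
  "measures_index_uniformly G M \<longleftrightarrow>
     (\<forall>e>0. \<exists>N. \<forall>n\<ge>N. \<forall>x\<in>carrier G. \<forall>H. subgroup H G \<longrightarrow>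
         \<bar>measure_pmf.prob (M n) (x <#\<^bsub>G\<^esub> H) - inv_index G H\<bar> < e)"

end

theory Submission
  imports Defs
begin

lemma prob_pair: "measure_pmf.prob (pair_pmf p q) X = (\<integral>x. measure_pmf.prob q {y. (x,y) \<in> X} \<partial>p)"
proof -
  have "pair_pmf p q = bind_pmf p (\<lambda>x. map_pmf (\<lambda>y. (x,y)) q)"
    by (simp add: pair_pmf_def map_pmf_def)
  hence "measure_pmf.prob (pair_pmf p q) X = measure (measure_pmf p \<bind> (\<lambda>x. measure_pmf (map_pmf (\<lambda>y. (x,y)) q))) X"
    by (simp add: measure_pmf_bind)
  also have "\<dots> = (\<integral>x. measure (measure_pmf (map_pmf (\<lambda>y. (x,y)) q)) X \<partial>p)"
    by (rule measure_pmf.measure_bind[where N="count_space UNIV"]) (auto simp: measure_pmf_in_subprob_algebra)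
  finally show ?thesis by (simp add: vimage_def)
qed

lemma pmf_integrable_bound:
  fixes f :: "'a \<Rightarrow> real"
  assumes "\<And>x. \<bar>f x\<bar> \<le> B"
  shows "integrable (measure_pmf p) f"
  by (rule measure_pmf.integrable_const_bound[where B=B]) (auto simp: assms)

lemma pmf_integral_indicator: "(\<integral>x. indicator S x \<partial>measure_pmf p) = measure_pmf.prob p S"
  by simp

lemma lim_lin: "left_invariant_mean G m \<Longrightarrow> bounded_on G f \<Longrightarrow> bounded_on G g \<Longrightarrow>
   m (\<lambda>x. a * f x + b * g x) = a * m f + b * m g"
  unfolding left_invariant_mean_def by blast
lemma lim_pos: "left_invariant_mean G m \<Longrightarrow> bounded_on G f \<Longrightarrow> (\<forall>x\<in>carrier G. f x \<ge> 0) \<Longrightarrow> m f \<ge> 0"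
  unfolding left_invariant_mean_def by blast
lemma lim_one: "left_invariant_mean G m \<Longrightarrow> m (\<lambda>x. 1) = 1"
  unfolding left_invariant_mean_def by blast
lemma lim_inv: "left_invariant_mean G m \<Longrightarrow> bounded_on G f \<Longrightarrow> g \<in> carrier G \<Longrightarrow> m (\<lambda>x. f (g \<otimes>\<^bsub>G\<^esub> x)) = m f"
  unfolding left_invariant_mean_def by blast

lemma bounded_const: "bounded_on G (\<lambda>x. c)"
  unfolding bounded_on_def by auto
lemma bounded_indicator: "bounded_on G (indicator S :: _ \<Rightarrow> real)"
  unfolding bounded_on_def by (rule exI[of _ 1]) (auto simp: indicator_def)
lemma bounded_add: "bounded_on G f \<Longrightarrow> bounded_on G g \<Longrightarrow> bounded_on G (\<lambda>x. f x + g x)"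
  unfolding bounded_on_def
proof -
  assume "\<exists>B. \<forall>x\<in>carrier G. \<bar>f x\<bar> \<le> B" "\<exists>B. \<forall>x\<in>carrier G. \<bar>g x\<bar> \<le> B"
  then obtain B1 B2 where "\<forall>x\<in>carrier G. \<bar>f x\<bar> \<le> B1" "\<forall>x\<in>carrier G. \<bar>g x\<bar> \<le> B2" by blast
  then show "\<exists>B. \<forall>x\<in>carrier G. \<bar>f x + g x\<bar> \<le> B"
    by (intro exI[of _ "B1 + B2"]) (auto intro: order_trans[OF abs_triangle_ineq] add_mono)
qed
lemma bounded_scale: "bounded_on G f \<Longrightarrow> bounded_on G (\<lambda>x. c * f x)"
  unfolding bounded_on_def
proof -
  assume "\<exists>B. \<forall>x\<in>carrier G. \<bar>f x\<bar> \<le> B"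
  then obtain B where B: "\<forall>x\<in>carrier G. \<bar>f x\<bar> \<le> B" by blast
  show "\<exists>B. \<forall>x\<in>carrier G. \<bar>c * f x\<bar> \<le> B"
    by (rule exI[of _ "\<bar>c\<bar> * B"]) (auto simp: abs_mult B intro: mult_left_mono)
qed
lemma bounded_sum: "finite S \<Longrightarrow> (\<forall>i\<in>S. bounded_on G (f i)) \<Longrightarrow> bounded_on G (\<lambda>x. \<Sum>i\<in>S. f i x)"
  by (induction S rule: finite_induct) (auto simp: bounded_const bounded_add)
lemma bounded_cong: "(\<forall>x\<in>carrier G. f x = g x) \<Longrightarrow> bounded_on G f \<Longrightarrow> bounded_on G g"
  unfolding bounded_on_def by metis

lemma lim_add: "left_invariant_mean G m \<Longrightarrow> bounded_on G f \<Longrightarrow> bounded_on G g \<Longrightarrow>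
   m (\<lambda>x. f x + g x) = m f + m g"
  using lim_lin[of G m f g 1 1] by simp
lemma lim_scale: "left_invariant_mean G m \<Longrightarrow> bounded_on G f \<Longrightarrow> m (\<lambda>x. c * f x) = c * m f"
  using lim_lin[of G m f f c 0] by simp
lemma lim_zero: "left_invariant_mean G m \<Longrightarrow> m (\<lambda>x. 0) = 0"
  using lim_scale[of G m "\<lambda>x. 1" 0] by (simp add: bounded_const)
lemma lim_sum: assumes lim: "left_invariant_mean G m" shows "finite S \<Longrightarrow> (\<forall>i\<in>S. bounded_on G (f i)) \<Longrightarrow>
   m (\<lambda>x. \<Sum>i\<in>S. f i x) = (\<Sum>i\<in>S. m (f i))"
proof (induction S rule: finite_induct)
  case empty then show ?case by (simp add: lim_zero[OF lim])
next
  case (insert a S)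
  then show ?case
    by (simp add: lim_add[OF lim, of "f a" "\<lambda>x. \<Sum>i\<in>S. f i x"] bounded_sum)
qed
lemma lim_mono: "left_invariant_mean G m \<Longrightarrow> bounded_on G f \<Longrightarrow> bounded_on G g \<Longrightarrow>
  (\<forall>x\<in>carrier G. f x \<le> g x) \<Longrightarrow> m f \<le> m g"
proof -
  assume a: "left_invariant_mean G m" "bounded_on G f" "bounded_on G g" "\<forall>x\<in>carrier G. f x \<le> g x"
  have "m (\<lambda>x. 1 * g x + (-1) * f x) \<ge> 0"
  proof (rule lim_pos[OF a(1)])
    show "bounded_on G (\<lambda>x. 1 * g x + (-1) * f x)"
      by (rule bounded_add[OF bounded_scale[OF a(3)] bounded_scale[OF a(2)]])
    show "\<forall>x\<in>carrier G. 1 * g x + (-1) * f x \<ge> 0" using a(4) by auto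
  qed
  moreover have "m (\<lambda>x. 1 * g x + (-1) * f x) = m g - m f"
    using lim_lin[of G m g f 1 "-1"] a by simp
  ultimately show ?thesis by simp
qed
lemma lim_cong: "left_invariant_mean G m \<Longrightarrow> bounded_on G f \<Longrightarrow> bounded_on G g \<Longrightarrow>
  (\<forall>x\<in>carrier G. f x = g x) \<Longrightarrow> m f = m g"
proof -
  assume a: "left_invariant_mean G m" "bounded_on G f" "bounded_on G g" "\<forall>x\<in>carrier G. f x = g x"
  have "m f \<le> m g" by (rule lim_mono[OF a(1-3)]) (use a(4) in simp)
  moreover have "m g \<le> m f" by (rule lim_mono[OF a(1) a(3) a(2)]) (use a(4) in simp)
  ultimately show ?thesis by simp
qed

lemma ex1_eq: "\<exists>!x. P x \<Longrightarrow> P a \<Longrightarrow> P b \<Longrightarrow> a = b" by blast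

context group begin

lemma mult_in_coset:
  assumes "subgroup H G" "g \<in> carrier G" "y \<in> carrier G"
  shows "(inv g \<otimes> y \<in> H) \<longleftrightarrow> (y \<in> g <# H)"
proof
  assume "y \<in> g <# H" then show "inv g \<otimes> y \<in> H"
    using subgroup.lcos_module_imp[OF assms(1) is_group assms(2)] by blast
next
  assume h: "inv g \<otimes> y \<in> H"
  have "g \<otimes> (inv g \<otimes> y) = y" using assms by (simp add: m_assoc[symmetric])
  then show "y \<in> g <# H" using h unfolding l_coset_def by force
qed

lemma coset_unique:
  assumes "subgroup H G" "y \<in> carrier G" "C \<in> lcosets H" "y \<in> C"
  shows "C = y <# H"
proof -
  obtain a where a: "a \<in> carrier G" "C = a <# H" using assms(3) unfolding LCOSETS_def by blast
  show ?thesis using l_repr_independence[of y a H] a assms by simp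
qed

lemma centralizer_subgroup:
  assumes t: "t \<in> carrier G"
  shows "subgroup (centralizer G t) G"
proof (rule subgroupI)
  show "centralizer G t \<subseteq> carrier G" unfolding centralizer_def by blast
  show "centralizer G t \<noteq> {}" using t unfolding centralizer_def by force
next
  fix a assume "a \<in> centralizer G t"
  then have a: "a \<in> carrier G" "a \<otimes> t = t \<otimes> a" unfolding centralizer_def by auto
  have "inv a \<otimes> t = inv a \<otimes> t \<otimes> (a \<otimes> inv a)" using a t by simp
  also have "\<dots> = inv a \<otimes> (t \<otimes> a) \<otimes> inv a" using a t by (simp add: m_assoc)
  also have "\<dots> = inv a \<otimes> (a \<otimes> t) \<otimes> inv a" using a by simp
  also have "\<dots> = t \<otimes> inv a"
  proof -
    have "inv a \<otimes> (a \<otimes> t) = t" using a(1) t by (simp add: m_assoc[symmetric])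
    then show ?thesis by simp
  qed
  finally show "inv a \<in> centralizer G t" using a unfolding centralizer_def by auto
next
  fix a b assume "a \<in> centralizer G t" "b \<in> centralizer G t"
  then have a: "a \<in> carrier G" "a \<otimes> t = t \<otimes> a" and b: "b \<in> carrier G" "b \<otimes> t = t \<otimes> b"
    unfolding centralizer_def by auto
  have "a \<otimes> b \<otimes> t = a \<otimes> (t \<otimes> b)" using a b t by (simp add: m_assoc)
  also have "\<dots> = t \<otimes> a \<otimes> b" using a b t by (simp add: m_assoc[symmetric])
  finally show "a \<otimes> b \<in> centralizer G t" using a b t unfolding centralizer_def by (simp add: m_assoc)
qed

lemma centralizer_coset:
  assumes Z: "subgroup Z G" "Z \<subseteq> center G" and t: "t \<in> carrier G" and y: "y \<in> t <# Z"
  shows "centralizer G y = centralizer G t"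
proof -
  obtain z where z: "z \<in> Z" "y = t \<otimes> z" using y unfolding l_coset_def by blast
  have zc: "z \<in> carrier G" "\<And>x. x \<in> carrier G \<Longrightarrow> z \<otimes> x = x \<otimes> z"
    using z(1) Z(2) unfolding center_def by auto
  have "x \<otimes> y = y \<otimes> x \<longleftrightarrow> x \<otimes> t = t \<otimes> x" if x: "x \<in> carrier G" for x
  proof -
    have "y \<otimes> x = (t \<otimes> x) \<otimes> z" using z zc x t by (simp add: m_assoc)
    moreover have "x \<otimes> y = (x \<otimes> t) \<otimes> z" using z zc x t by (simp add: m_assoc)
    ultimately show ?thesis using x t zc by (simp add: right_cancel)
  qed
  then show ?thesis unfolding centralizer_def by auto
qed


lemma mean_coset_eq:
  assumes lim: "left_invariant_mean G m" and H: "subgroup H G" and g: "g \<in> carrier G"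
  shows "m (indicator (g <# H)) = m (indicator H)"
proof -
  have "m (\<lambda>x. indicator H (inv g \<otimes> x) :: real) = m (indicator H)"
    by (rule lim_inv[OF lim bounded_indicator]) (use g in simp)
  moreover have "m (indicator (g <# H)) = m (\<lambda>x. indicator H (inv g \<otimes> x) :: real)"
  proof (rule lim_cong[OF lim bounded_indicator])
    show "bounded_on G (\<lambda>x. indicator H (inv g \<otimes> x) :: real)"
      unfolding bounded_on_def by (rule exI[of _ 1]) (auto simp: indicator_def)
    show "\<forall>x\<in>carrier G. indicator (g <# H) x = (indicator H (inv g \<otimes> x) :: real)"
      using mult_in_coset[OF H g] by (auto simp: indicator_def)
  qed
  ultimately show ?thesis by simp
qed

lemma sum_ind_cosets:
  assumes H: "subgroup H G" and S: "S \<subseteq> lcosets H" "finite S" and y: "y \<in> carrier G"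
  shows "(\<Sum>C\<in>S. indicator C y :: real) = (if y <# H \<in> S then 1 else 0)"
proof -
  have "(\<Sum>C\<in>S. indicator C y :: real) = (\<Sum>C\<in>S. if C = y <# H then 1 else 0)"
  proof (rule sum.cong)
    fix C assume C: "C \<in> S"
    have "y \<in> C \<longleftrightarrow> C = y <# H"
      using coset_unique[OF H y, of C] C S lcos_self[OF y H] by blast
    then show "indicator C y = (if C = y <# H then 1 else 0 :: real)" by (simp add: indicator_def)
  qed simp
  also have "\<dots> = (if y <# H \<in> S then 1 else 0)" using S(2) by (simp add: sum.delta')
  finally show ?thesis .
qed

lemma mean_sum_cosets:
  assumes lim: "left_invariant_mean G m" and H: "subgroup H G"
    and S: "S \<subseteq> lcosets H" "finite S"
  shows "m (\<lambda>y. \<Sum>C\<in>S. indicator C y :: real) = real (card S) * m (indicator H)"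
proof -
  have "m (\<lambda>y. \<Sum>C\<in>S. indicator C y :: real) = (\<Sum>C\<in>S. m (indicator C))"
    using lim_sum[OF lim S(2), of indicator] by (simp add: bounded_indicator)
  also have "\<dots> = (\<Sum>C\<in>S. m (indicator H))"
  proof (rule sum.cong)
    fix C assume "C \<in> S"
    then obtain a where "a \<in> carrier G" "C = a <# H" using S unfolding LCOSETS_def by blast
    then show "m (indicator C) = m (indicator H)" using mean_coset_eq[OF lim H] by simp
  qed simp
  finally show ?thesis by simp
qed

lemma mean_subgroup:
  assumes lim: "left_invariant_mean G m" and H: "subgroup H G"
  shows "m (indicator H) = inv_index G H"
proof -
  have bs: "bounded_on G (\<lambda>y. \<Sum>C\<in>S. indicator C y :: real)" if "finite S" for S
    using bounded_sum[OF that, of G indicator] by (simp add: bounded_indicator)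
  have nn: "m (indicator H) \<ge> 0" by (rule lim_pos[OF lim bounded_indicator]) simp
  have le: "real (card S) * m (indicator H) \<le> 1" if S: "S \<subseteq> lcosets H" "finite S" for S
  proof -
    have "real (card S) * m (indicator H) = m (\<lambda>y. \<Sum>C\<in>S. indicator C y :: real)"
      using mean_sum_cosets[OF lim H S] by simp
    also have "\<dots> \<le> m (\<lambda>x. 1)"
      by (rule lim_mono[OF lim bs[OF S(2)] bounded_const]) (simp add: sum_ind_cosets[OF H S])
    finally show ?thesis using lim_one[OF lim] by simp
  qed
  show ?thesis
  proof (cases "finite (lcosets H)")
    case True
    have mem: "H \<in> lcosets H" using lcos_mult_one[of H] subgroup.subset[OF H] unfolding LCOSETS_def by force
    have "real (card (lcosets H)) * m (indicator H) = m (\<lambda>y. \<Sum>C\<in>lcosets H. indicator C y :: real)"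
      using mean_sum_cosets[OF lim H _ True] by simp
    also have "\<dots> = m (\<lambda>x. 1)"
    proof (rule lim_cong[OF lim bs[OF True] bounded_const], intro ballI)
      fix y assume y: "y \<in> carrier G"
      have "y <# H \<in> lcosets H" using y unfolding LCOSETS_def by blast
      then show "(\<Sum>C\<in>lcosets H. indicator C y :: real) = 1"
        by (simp add: sum_ind_cosets[OF H subset_refl True y])
    qed
    finally have "real (card (lcosets H)) * m (indicator H) = 1" using lim_one[OF lim] by simp
    moreover have "card (lcosets H) > 0" using True mem by (auto simp: card_gt_0_iff)
    ultimately show ?thesis using True unfolding inv_index_def
      by (auto simp: eq_divide_eq mult.commute)
  next
    case False
    have "m (indicator H) \<le> 0"
    proof (rule ccontr)
      assume "\<not> m (indicator H) \<le> 0"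
      then have "m (indicator H) > 0" by simp
      then obtain n where n: "1 < real n * m (indicator H)" using reals_Archimedean3 by blast
      obtain S where S: "S \<subseteq> lcosets H" "finite S" "card S = n"
        using infinite_arbitrarily_large[OF False] by blast
      show False using le[OF S(1,2)] S(3) n by simp
    qed
    then show ?thesis using nn False unfolding inv_index_def by simp
  qed
qed

end


lemma (in group) main7:
  assumes "subgroup Z G" and "Z \<subseteq> center G"
    and "finite (lcosets Z)"
    and "left_transversal G Z T"
  shows "(\<forall>m. left_invariant_mean G m \<longrightarrow>
            dc_mean G m = (1 / real (card (lcosets Z))) * (\<Sum>t\<in>T. inv_index G (centralizer G t)))
       \<and> (\<forall>M :: nat \<Rightarrow> 'a pmf. (\<forall>n. set_pmf (M n) \<subseteq> carrier G) \<and> measures_index_uniformly G M \<longrightarrow>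
            dc_seq G M = ereal ((1 / real (card (lcosets Z))) * (\<Sum>t\<in>T. inv_index G (centralizer G t)))
          \<and> (\<lambda>n. comm_prob G (M n)) \<longlonglongrightarrow> (1 / real (card (lcosets Z))) * (\<Sum>t\<in>T. inv_index G (centralizer G t)))"
proof -
  define k where "k = card (lcosets Z)"
  define c where "c t = inv_index G (centralizer G t)" for t
  define L where "L = (1 / real k) * (\<Sum>t\<in>T. c t)"
  define F where "F y = (\<Sum>t\<in>T. c t * indicator (t <# Z) y :: real)" for y
  have TG: "T \<subseteq> carrier G" and uniq: "\<forall>C\<in>lcosets Z. \<exists>!t. t \<in> T \<and> t \<in> C"
    using assms(4) unfolding left_transversal_def by auto
  have finT: "finite T"
  proof -
    have "inj_on (\<lambda>t. t <# Z) T"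
    proof (rule inj_onI)
      fix t1 t2 assume t: "t1 \<in> T" "t2 \<in> T" "t1 <# Z = t2 <# Z"
      have C: "t1 <# Z \<in> lcosets Z" using t TG unfolding LCOSETS_def by blast
      have "t1 \<in> t1 <# Z" "t2 \<in> t1 <# Z" using lcos_self[OF _ assms(1)] t TG by auto
      then show "t1 = t2" using ex1_eq[OF bspec[OF uniq C]] t(1,2) by blast
    qed
    moreover have "(\<lambda>t. t <# Z) ` T \<subseteq> lcosets Z" using TG unfolding LCOSETS_def by auto
    ultimately show ?thesis using finite_imageD[OF finite_subset[OF _ assms(3)]] by blast
  qed
  have rep: "\<exists>t\<in>T. y \<in> t <# Z \<and> (\<forall>t'\<in>T. y \<in> t' <# Z \<longrightarrow> t' = t)" if y: "y \<in> carrier G" for y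
  proof -
    have C: "y <# Z \<in> lcosets Z" using y unfolding LCOSETS_def by blast
    obtain t where t: "t \<in> T" "t \<in> y <# Z" using bspec[OF uniq C] by blast
    have u: "\<And>t'. t' \<in> T \<Longrightarrow> t' \<in> y <# Z \<Longrightarrow> t' = t"
      using ex1_eq[OF bspec[OF uniq C]] t by blast
    have "y \<in> t <# Z" using l_coset_swap[OF t(2) y assms(1)] .
    moreover have "t' = t" if "t' \<in> T" "y \<in> t' <# Z" for t'
      using u[OF that(1) l_coset_swap[OF that(2) _ assms(1)]] that TG by auto
    ultimately show ?thesis using t by blast
  qed
  have Fy: "F y = c y" if y: "y \<in> carrier G" for y
  proof -
    obtain t where t: "t \<in> T" "y \<in> t <# Z" "\<forall>t'\<in>T. y \<in> t' <# Z \<longrightarrow> t' = t" using rep[OF y] by blast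
    have "F y = (\<Sum>t'\<in>T. if t' = t then c t else 0)"
      unfolding F_def
    proof (rule sum.cong[OF refl])
      fix t' assume t': "t' \<in> T"
      show "c t' * indicator (t' <# Z) y = (if t' = t then c t else 0)"
      proof (cases "t' = t")
        case True then show ?thesis using t(2) by simp
      next
        case False then have "y \<notin> t' <# Z" using t(3) t' by blast
        then show ?thesis using False by simp
      qed
    qed
    also have "\<dots> = c t" using finT t(1) by simp
    also have "c t = c y" unfolding c_def using centralizer_coset[OF assms(1,2) _ t(2)] t(1) TG by auto
    finally show ?thesis .
  qed
  have bterm: "bounded_on G (\<lambda>y. c t * indicator (t <# Z) y :: real)" for t
    by (rule bounded_scale[OF bounded_indicator])
  have Fb: "bounded_on G F"
    unfolding F_def by (rule bounded_sum[OF finT]) (simp add: bterm)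
  have memZ: "Z \<in> lcosets Z" using lcos_mult_one[of Z] subgroup.subset[OF assms(1)] unfolding LCOSETS_def by force
  have invZ: "inv_index G Z = 1 / real k" unfolding inv_index_def k_def using assms(3) by simp
  have sumL: "(\<Sum>t\<in>T. c t * (1 / real k)) = L" unfolding L_def by (simp add: sum_divide_distrib)

  have part1: "\<forall>m. left_invariant_mean G m \<longrightarrow> dc_mean G m = L"
  proof (intro allI impI)
    fix m assume lim: "left_invariant_mean G m"
    define inner where "inner y = m (\<lambda>x. if x \<otimes> y = y \<otimes> x then 1 else 0 :: real)" for y
    have inner_eq: "inner y = F y" if y: "y \<in> carrier G" for y
    proof -
      have "inner y = m (indicator (centralizer G y))"
        unfolding inner_def
      proof (rule lim_cong[OF lim _ bounded_indicator])
        show "bounded_on G (\<lambda>x. if x \<otimes> y = y \<otimes> x then 1 else 0 :: real)"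
          unfolding bounded_on_def by (rule exI[of _ 1]) auto
        show "\<forall>x\<in>carrier G. (if x \<otimes> y = y \<otimes> x then 1 else 0 :: real) = indicator (centralizer G y) x"
          by (auto simp: indicator_def centralizer_def)
      qed
      also have "\<dots> = c y" unfolding c_def by (rule mean_subgroup[OF lim centralizer_subgroup[OF y]])
      also have "\<dots> = F y" using Fy[OF y] by simp
      finally show ?thesis .
    qed
    have "dc_mean G m = m inner" unfolding dc_mean_def inner_def by simp
    also have "\<dots> = m F"
      by (rule lim_cong[OF lim bounded_cong[OF _ Fb] Fb]) (use inner_eq in auto)
    also have "\<dots> = (\<Sum>t\<in>T. m (\<lambda>y. c t * indicator (t <# Z) y))"
      unfolding F_def by (rule lim_sum[OF lim finT]) (simp add: bterm)
    also have "\<dots> = (\<Sum>t\<in>T. c t * (1 / real k))"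
    proof (rule sum.cong[OF refl])
      fix t assume t: "t \<in> T"
      have "m (\<lambda>y. c t * indicator (t <# Z) y) = c t * m (indicator (t <# Z))"
        by (rule lim_scale[OF lim bounded_indicator])
      also have "m (indicator (t <# Z)) = m (indicator Z)"
        using mean_coset_eq[OF lim assms(1)] t TG by auto
      also have "\<dots> = 1 / real k" using mean_subgroup[OF lim assms(1)] invZ by simp
      finally show "m (\<lambda>y. c t * indicator (t <# Z) y) = c t * (1 / real k)" .
    qed
    also have "\<dots> = L" by (rule sumL)
    finally show "dc_mean G m = L" .
  qed

  have part2: "\<forall>M :: nat \<Rightarrow> 'a pmf. (\<forall>n. set_pmf (M n) \<subseteq> carrier G) \<and> measures_index_uniformly G M \<longrightarrow>
      dc_seq G M = ereal L \<and> (\<lambda>n. comm_prob G (M n)) \<longlonglongrightarrow> L"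
  proof (intro allI impI, elim conjE)
    fix M :: "nat \<Rightarrow> 'a pmf"
    assume supp: "\<forall>n. set_pmf (M n) \<subseteq> carrier G" and unif: "measures_index_uniformly G M"
    have unif': "\<exists>N. \<forall>n\<ge>N. \<forall>x\<in>carrier G. \<forall>H. subgroup H G \<longrightarrow>
         \<bar>measure_pmf.prob (M n) (x <# H) - inv_index G H\<bar> < e" if "e > 0" for e
      using unif that unfolding measures_index_uniformly_def by blast
    define g where "g n x = measure_pmf.prob (M n) {y. x \<otimes> y = y \<otimes> x}" for n x
    define Q where "Q n = (\<Sum>t\<in>T. c t * measure_pmf.prob (M n) (t <# Z))" for n
    have P: "comm_prob G (M n) = (\<integral>x. g n x \<partial>M n)" for n
      unfolding comm_prob_def g_def prob_pair by simp
    have gx: "g n x = measure_pmf.prob (M n) (\<one> <# centralizer G x)" if x: "x \<in> set_pmf (M n)" for n x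
    proof -
      have xc: "x \<in> carrier G" using x supp by auto
      have "\<one> <# centralizer G x = centralizer G x"
        by (rule lcos_mult_one) (auto simp: centralizer_def)
      moreover have "{y. x \<otimes> y = y \<otimes> x} \<inter> set_pmf (M n) = centralizer G x \<inter> set_pmf (M n)"
        using supp by (auto simp: centralizer_def)
      ultimately show ?thesis unfolding g_def by (metis measure_Int_set_pmf)
    qed
    have ig: "integrable (M n) (g n)" for n
      by (rule pmf_integrable_bound[where B=1]) (simp add: g_def)
    have Fbound: "\<bar>F x\<bar> \<le> (\<Sum>t\<in>T. \<bar>c t\<bar>)" for x
    proof -
      have "\<bar>F x\<bar> \<le> (\<Sum>t\<in>T. \<bar>c t * indicator (t <# Z) x\<bar>)" unfolding F_def by (rule sum_abs)
      also have "\<dots> \<le> (\<Sum>t\<in>T. \<bar>c t\<bar>)" by (rule sum_mono) (auto simp: indicator_def)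
      finally show ?thesis .
    qed
    have iF: "integrable (M n) F" for n by (rule pmf_integrable_bound[OF Fbound])
    have Fint: "(\<integral>x. F x \<partial>M n) = Q n" for n
    proof -
      have it: "integrable (M n) (\<lambda>x. c t * indicator (t <# Z) x :: real)" for t
        by (rule pmf_integrable_bound[of _ "\<bar>c t\<bar>"]) (simp add: indicator_def abs_mult)
      have "(\<integral>x. F x \<partial>M n) = (\<Sum>t\<in>T. (\<integral>x. c t * indicator (t <# Z) x \<partial>M n))"
        unfolding F_def by (rule Bochner_Integration.integral_sum[OF it])
      also have "\<dots> = Q n" unfolding Q_def by simp
      finally show ?thesis .
    qed
    have Qlim: "Q \<longlonglongrightarrow> L"
    proof -
      have each: "(\<lambda>n. measure_pmf.prob (M n) (t <# Z)) \<longlonglongrightarrow> 1 / real k" if t: "t \<in> T" for t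
      proof (rule LIMSEQ_I)
        fix r :: real assume "r > 0"
        then obtain N where N: "\<forall>n\<ge>N. \<forall>x\<in>carrier G. \<forall>H. subgroup H G \<longrightarrow>
           \<bar>measure_pmf.prob (M n) (x <# H) - inv_index G H\<bar> < r" using unif' by blast
        show "\<exists>no. \<forall>n\<ge>no. norm (measure_pmf.prob (M n) (t <# Z) - 1 / real k) < r"
          using N t TG assms(1) invZ by (metis real_norm_def subsetD)
      qed
      have "(\<lambda>n. \<Sum>t\<in>T. c t * measure_pmf.prob (M n) (t <# Z)) \<longlonglongrightarrow> (\<Sum>t\<in>T. c t * (1 / real k))"
        by (intro tendsto_sum tendsto_mult_left each)
      then show ?thesis unfolding Q_def sumL .
    qed
    have lim: "(\<lambda>n. comm_prob G (M n)) \<longlonglongrightarrow> L"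
    proof (rule LIMSEQ_I)
      fix r :: real assume r: "r > 0"
      obtain N1 where N1: "\<forall>n\<ge>N1. \<forall>x\<in>carrier G. \<forall>H. subgroup H G \<longrightarrow>
           \<bar>measure_pmf.prob (M n) (x <# H) - inv_index G H\<bar> < r / 2" using unif' r by (meson half_gt_zero)
      obtain N2 where N2: "\<forall>n\<ge>N2. norm (Q n - L) < r / 2" using LIMSEQ_D[OF Qlim, of "r / 2"] r by auto
      show "\<exists>no. \<forall>n\<ge>no. norm (comm_prob G (M n) - L) < r"
      proof (intro exI[of _ "max N1 N2"] allI impI)
        fix n assume n: "max N1 N2 \<le> n"
        have ae: "\<bar>g n x - F x\<bar> \<le> r / 2" if x: "x \<in> set_pmf (M n)" for x
        proof -
          have xc: "x \<in> carrier G" using x supp by auto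
          have "\<bar>measure_pmf.prob (M n) (\<one> <# centralizer G x) - inv_index G (centralizer G x)\<bar> < r / 2"
            using N1 n centralizer_subgroup[OF xc] by auto
          then show ?thesis using gx[OF x] Fy[OF xc] unfolding c_def by simp
        qed
        have ae1: "\<forall>x\<in>set_pmf (M n). g n x \<le> F x + r / 2"
        proof
          fix x assume x: "x \<in> set_pmf (M n)"
          have "g n x - F x \<le> r / 2" by (rule abs_le_D1[OF ae[OF x]])
          then show "g n x \<le> F x + r / 2" by linarith
        qed
        have ae2: "\<forall>x\<in>set_pmf (M n). F x \<le> g n x + r / 2"
        proof
          fix x assume x: "x \<in> set_pmf (M n)"
          have "- (g n x - F x) \<le> r / 2" by (rule abs_le_D2[OF ae[OF x]])
          then show "F x \<le> g n x + r / 2" by linarith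
        qed
        have ic: "integrable (M n) (\<lambda>x. r / 2 :: real)" by simp
        have "(\<integral>x. g n x \<partial>M n) \<le> (\<integral>x. F x + r / 2 \<partial>M n)"
          by (rule integral_mono_AE[OF ig Bochner_Integration.integrable_add[OF iF ic]]) (use ae1 in \<open>simp add: AE_measure_pmf_iff\<close>)
        also have "\<dots> = (\<integral>x. F x \<partial>M n) + r / 2" by (subst Bochner_Integration.integral_add[OF iF ic]) simp
        finally have up: "(\<integral>x. g n x \<partial>M n) \<le> Q n + r / 2" using Fint by simp
        have "(\<integral>x. F x \<partial>M n) \<le> (\<integral>x. g n x + r / 2 \<partial>M n)"
          by (rule integral_mono_AE[OF iF Bochner_Integration.integrable_add[OF ig ic]]) (use ae2 in \<open>simp add: AE_measure_pmf_iff\<close>)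
        also have "\<dots> = (\<integral>x. g n x \<partial>M n) + r / 2" by (subst Bochner_Integration.integral_add[OF ig ic]) simp
        finally have lo: "Q n \<le> (\<integral>x. g n x \<partial>M n) + r / 2" using Fint by simp
        have "\<bar>Q n - L\<bar> < r / 2" using N2 n by auto
        then have q: "Q n - L < r / 2" "- (Q n - L) < r / 2" by (simp_all only: abs_less_iff)
        have "comm_prob G (M n) - L < r" "- (comm_prob G (M n) - L) < r"
          using up lo P[of n] q by linarith+
        then show "norm (comm_prob G (M n) - L) < r" by (simp only: real_norm_def abs_less_iff)
      qed
    qed
    have "dc_seq G M = ereal L"
      unfolding dc_seq_def by (rule lim_imp_Limsup[OF trivial_limit_sequentially tendsto_ereal[OF lim]])
    then show "dc_seq G M = ereal L \<and> (\<lambda>n. comm_prob G (M n)) \<longlonglongrightarrow> L" using lim by simp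
  qed
  show ?thesis using part1 part2 unfolding L_def k_def c_def by simp
qed


theorem proposition7p1:
  fixes G :: "('a, 'b) monoid_scheme" and Z T :: "'a set"
  assumes "group G"
    and "countable (carrier G)"
    and "subgroup Z G" and "Z \<subseteq> center G"
    and "finite (lcosets\<^bsub>G\<^esub> Z)"
    and "left_transversal G Z T"
  shows "(\<forall>m. left_invariant_mean G m \<longrightarrow>
            dc_mean G m = (1 / real (card (lcosets\<^bsub>G\<^esub> Z))) * (\<Sum>t\<in>T. inv_index G (centralizer G t)))
       \<and> (\<forall>M :: nat \<Rightarrow> 'a pmf. (\<forall>n. set_pmf (M n) \<subseteq> carrier G) \<and> measures_index_uniformly G M \<longrightarrow>
            dc_seq G M = ereal ((1 / real (card (lcosets\<^bsub>G\<^esub> Z))) * (\<Sum>t\<in>T. inv_index G (centralizer G t)))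
          \<and> (\<lambda>n. comm_prob G (M n)) \<longlonglongrightarrow> (1 / real (card (lcosets\<^bsub>G\<^esub> Z))) * (\<Sum>t\<in>T. inv_index G (centralizer G t)))"
  using group.main7[OF assms(1,3,4,5,6)] .

end
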